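(* Let $(X,d)$ be a complete $\mathrm{CAT}(0)$-space, $f:X\to\mathbb{R}$ a lower semi-continuous quasi-convex function, $x_0\in X$ and $(\tau_k)_{k\in\mathbb N}$ a sequence of positive numbers. Suppose a sequence $(x^k)_{k\ge0}$ exists with $x^0=x_0$ and $x^k\in\mathcal J^f_{\tau_k}(x^{k-1})$ for all $k\in\mathbb N$. Then: (i) $d(x^l,x^m)\le d(x^k,x^m)$ for all $0\le k<l<m$; (ii) setting $T_0:=0$, $T_k:=\tau_1+\dots+\tau_k$ and $\ell:=\lim_k T_k\in(0,\infty]$, the curve $\xi:[0,\ell)\to X$ defined by $\xi(t):=\gamma_{x^{k-1}x^k}\big((t-T_{k-1})/\tau_k\big)$ for $t\in[T_{k-1},T_k)$, $k\in\mathbb N$, is self-contracted.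
   Context: A metric space is geodesic if any two points $x,y$ are joined by a curve $\gamma:[0,1]\to X$ with $\gamma(0)=x$, $\gamma(1)=y$, $d(\gamma(s),\gamma(t))=|t-s|d(x,y)$ (a minimal geodesic). A geodesic metric space $(X,d)$ is a $\mathrm{CAT}(0)$-space if for all $x,y,z\in X$ and every minimal geodesic $\gamma$ from $y$ to $z$, $d^2(x,\gamma(s))\le(1-s)d^2(x,y)+sd^2(x,z)-(1-s)sd^2(y,z)$ for all $s\in[0,1]$; then minimal geodesics are unique, denoted $\gamma_{xy}$. $f$ is quasi-convex if $f(\gamma_{xy}(s))\le\max\{f(x),f(y)\}$ for all $x,y\in X$, $s\in(0,1)$. For $\tau>0$, $\mathcal J^f_\tau(x):=\{z\in X: f(z)+d^2(x,z)/(2\tau)=\inf_{w\in X}\{f(w)+d^2(x,w)/(2\tau)\}\}$. A map $\xi:[0,\ell)\to X$ is self-contracted if $d(\xi(t_2),\xi(t_3))\le d(\xi(t_1),\xi(t_3))$ for all $0\le t_1\le t_2\le t_3<\ell$. *)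

theory Defs
  imports "HOL-Analysis.Analysis"
begin

definition min_geodesic :: "(real \<Rightarrow> 'a::metric_space) \<Rightarrow> 'a \<Rightarrow> 'a \<Rightarrow> bool" where
  "min_geodesic \<gamma> x y \<longleftrightarrow> \<gamma> 0 = x \<and> \<gamma> 1 = y \<and>
     (\<forall>s\<in>{0..1}. \<forall>t\<in>{0..1}. dist (\<gamma> s) (\<gamma> t) = \<bar>t - s\<bar> * dist x y)"

definition geodesic_space :: "'a::metric_space itself \<Rightarrow> bool" where
  "geodesic_space _ \<longleftrightarrow> (\<forall>x y::'a. \<exists>\<gamma>. min_geodesic \<gamma> x y)"

definition CAT0 :: "'a::metric_space itself \<Rightarrow> bool" where
  "CAT0 T \<longleftrightarrow> geodesic_space T \<and>
     (\<forall>x y z::'a. \<forall>\<gamma>. min_geodesic \<gamma> y z \<longrightarrow> (\<forall>s\<in>{0..1}.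
        (dist x (\<gamma> s))\<^sup>2 \<le> (1 - s) * (dist x y)\<^sup>2 + s * (dist x z)\<^sup>2 - (1 - s) * s * (dist y z)\<^sup>2))"

text \<open>The (in a CAT(0) space unique) minimal geodesic from x to y.\<close>
definition geo :: "'a::metric_space \<Rightarrow> 'a \<Rightarrow> real \<Rightarrow> 'a" where
  "geo x y = (SOME \<gamma>. min_geodesic \<gamma> x y)"

definition quasi_convex :: "('a::metric_space \<Rightarrow> real) \<Rightarrow> bool" where
  "quasi_convex f \<longleftrightarrow> (\<forall>x y. \<forall>s\<in>{0<..<1}. f (geo x y s) \<le> max (f x) (f y))"

definition lsc :: "('a::topological_space \<Rightarrow> real) \<Rightarrow> bool" where
  "lsc f \<longleftrightarrow> (\<forall>x. \<forall>e>0. \<forall>\<^sub>F y in at x. f x - e < f y)"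

definition JJ :: "('a::metric_space \<Rightarrow> real) \<Rightarrow> real \<Rightarrow> 'a \<Rightarrow> 'a set" where
  "JJ f \<tau> x = {z. \<forall>w. f z + (dist x z)\<^sup>2 / (2 * \<tau>) \<le> f w + (dist x w)\<^sup>2 / (2 * \<tau>)}"

definition self_contracted :: "real set \<Rightarrow> (real \<Rightarrow> 'a::metric_space) \<Rightarrow> bool" where
  "self_contracted I \<xi> \<longleftrightarrow> (\<forall>t1\<in>I. \<forall>t2\<in>I. \<forall>t3\<in>I. t1 \<le> t2 \<and> t2 \<le> t3 \<longrightarrow>
      dist (\<xi> t2) (\<xi> t3) \<le> dist (\<xi> t1) (\<xi> t3))"

end

theory Submission
  imports Defs
begin

lemma geo_mg:
  assumes "CAT0 TYPE('a::metric_space)"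
  shows "min_geodesic (geo x y) x (y::'a)"
proof -
  have "\<exists>\<gamma>. min_geodesic \<gamma> x y"
    using assms unfolding CAT0_def geodesic_space_def by blast
  then show ?thesis unfolding geo_def by (rule someI_ex)
qed

lemma geo_0: "CAT0 TYPE('a::metric_space) \<Longrightarrow> geo x y 0 = (x::'a)"
  using geo_mg[of x y] by (simp add: min_geodesic_def)

lemma geo_1: "CAT0 TYPE('a::metric_space) \<Longrightarrow> geo x y 1 = (y::'a)"
  using geo_mg[of x y] by (simp add: min_geodesic_def)

lemma geo_dist: "CAT0 TYPE('a::metric_space) \<Longrightarrow> s \<in> {0..1} \<Longrightarrow> t \<in> {0..1} \<Longrightarrow>
   dist (geo x y s) (geo x y t) = \<bar>t - s\<bar> * dist x (y::'a)"
  using geo_mg[of x y] unfolding min_geodesic_def by blast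

lemma cat0_ineq:
  assumes "CAT0 TYPE('a::metric_space)" "min_geodesic \<gamma> y z" "s \<in> {0..1}"
  shows "(dist (x::'a) (\<gamma> s))\<^sup>2 \<le> (1 - s) * (dist x y)\<^sup>2 + s * (dist x z)\<^sup>2 - (1 - s) * s * (dist y z)\<^sup>2"
  using assms unfolding CAT0_def by blast

lemma eps_lemma:
  fixes a b c :: real
  assumes "\<And>u. 0 < u \<Longrightarrow> u < 1 \<Longrightarrow> a + (1 - u) * c \<le> b" "c \<ge> 0"
  shows "a + c \<le> b"
proof (rule ccontr)
  assume n: "\<not> a + c \<le> b"
  define e where "e = a + c - b"
  have e: "e > 0" using n e_def by simp
  then have c: "c > 0" using assms(1)[of "1/2"] e_def by simp
  define u where "u = min (1/2) (e / (2*c))"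
  have u0: "u > 0" using e c u_def by simp
  have u1: "u < 1" using u_def by simp
  have "u * c \<le> (e/(2*c)) * c" using c u_def by (intro mult_right_mono) auto
  also have "\<dots> = e/2" using c by simp
  finally have "u * c \<le> e/2" .
  moreover have "a + (1 - u) * c \<le> b" using assms(1) u0 u1 by simp
  ultimately show False using e e_def by (simp add: algebra_simps)
qed

lemma key:
  fixes f :: "'a::metric_space \<Rightarrow> real"
  assumes cat: "CAT0 TYPE('a)" and qc: "quasi_convex f" and tau: "\<tau> > 0"
    and zJ: "z \<in> JJ f \<tau> x" and fw: "f w \<le> f z" and v: "v \<in> {0..1}"
  shows "dist w z \<le> dist w (geo x z v)"
proof -
  define q where "q = geo x z v"
  define D where "D = dist x z"
  define a where "a = dist q z"
  define b where "b = dist q w"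
  define c where "c = dist z w"
  have xq: "dist x q = v * D"
    using geo_dist[OF cat, of 0 v x z] geo_0[OF cat, of x z] v by (simp add: q_def D_def)
  have aD: "a = (1 - v) * D"
    using geo_dist[OF cat, of v 1 x z] geo_1[OF cat, of x z] v by (simp add: a_def q_def D_def)
  have step: "a\<^sup>2 + (1 - u) * c\<^sup>2 \<le> b\<^sup>2" if u: "0 < u" "u < 1" for u
  proof -
    define p where "p = geo z w u"
    have "f p \<le> max (f z) (f w)" using qc u unfolding quasi_convex_def p_def by auto
    then have fp: "f p \<le> f z" using fw by simp
    have "f z + D\<^sup>2 / (2 * \<tau>) \<le> f p + (dist x p)\<^sup>2 / (2 * \<tau>)"
      using zJ unfolding JJ_def D_def by blast
    then have "D\<^sup>2 / (2 * \<tau>) \<le> (dist x p)\<^sup>2 / (2 * \<tau>)" using fp by simp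
    moreover have pos: "2 * \<tau> > 0" using tau by simp
    ultimately have "D\<^sup>2 \<le> (dist x p)\<^sup>2" using divide_le_cancel by blast
    then have "D \<le> dist x p" by (rule power2_le_imp_le) simp
    moreover have "dist x p \<le> dist x q + dist q p" by (rule dist_triangle)
    ultimately have ap: "a \<le> dist q p" using xq aD by (simp add: algebra_simps)
    have "a\<^sup>2 \<le> (dist q p)\<^sup>2" using ap a_def by (simp add: power_mono)
    also have "\<dots> \<le> (1 - u) * a\<^sup>2 + u * b\<^sup>2 - (1 - u) * u * c\<^sup>2"
      using cat0_ineq[OF cat geo_mg[OF cat, of z w], of u q] u
      by (simp add: p_def a_def b_def c_def)
    finally have "u * a\<^sup>2 \<le> u * (b\<^sup>2 - (1 - u) * c\<^sup>2)" by (simp add: algebra_simps)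
    then have "a\<^sup>2 \<le> b\<^sup>2 - (1 - u) * c\<^sup>2" using u by simp
    then show ?thesis by simp
  qed
  have "a\<^sup>2 + c\<^sup>2 \<le> b\<^sup>2" by (rule eps_lemma) (use step in auto)
  then have "c\<^sup>2 \<le> b\<^sup>2" using zero_le_power2[of a] by linarith
  then have "c \<le> b" by (rule power2_le_imp_le) (simp add: b_def)
  then show ?thesis by (simp add: b_def c_def q_def dist_commute)
qed

lemma mono_seg:
  fixes f :: "'a::metric_space \<Rightarrow> real"
  assumes cat: "CAT0 TYPE('a)" and qc: "quasi_convex f" and tau: "\<tau> > 0"
    and zJ: "z \<in> JJ f \<tau> x" and fw: "f w \<le> f z" and s: "0 \<le> s" "s \<le> s'" "s' \<le> 1"
  shows "dist w (geo x z s') \<le> dist w (geo x z s)"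
proof (cases "s = 1")
  case True then show ?thesis using s by simp
next
  case False
  then have s1: "s < 1" using s by simp
  define q where "q = geo x z s"
  define g where "g = (\<lambda>r. geo x z (s + r * (1 - s)))"
  have inr: "s + r * (1 - s) \<in> {0..1}" if "r \<in> {0..1}" for r
  proof -
    have "r * (1 - s) \<le> 1 * (1 - s)" using that s1 by (intro mult_right_mono) auto
    moreover have "0 \<le> r * (1 - s)" using that s1 by auto
    ultimately show ?thesis using s by auto
  qed
  have dqz: "dist q z = (1 - s) * dist x z"
    using geo_dist[OF cat, of s 1 x z] geo_1[OF cat, of x z] s s1 by (simp add: q_def)
  have mg: "min_geodesic g q z"
    unfolding min_geodesic_def
  proof (intro conjI ballI)
    show "g 0 = q" by (simp add: g_def q_def)
    show "g 1 = z" by (simp add: g_def geo_1[OF cat])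
    fix r1 r2 :: real assume r: "r1 \<in> {0..1}" "r2 \<in> {0..1}"
    have "dist (g r1) (g r2) = \<bar>(s + r2 * (1 - s)) - (s + r1 * (1 - s))\<bar> * dist x z"
      unfolding g_def by (rule geo_dist[OF cat inr[OF r(1)] inr[OF r(2)]])
    also have "\<dots> = \<bar>r2 - r1\<bar> * dist q z"
      using s1 dqz by (simp add: abs_mult left_diff_distrib[symmetric])
    finally show "dist (g r1) (g r2) = \<bar>r2 - r1\<bar> * dist q z" .
  qed
  define r where "r = (s' - s) / (1 - s)"
  have r01: "r \<in> {0..1}" using s s1 by (auto simp: r_def field_simps)
  have gr: "g r = geo x z s'" using s1 by (simp add: g_def r_def)
  have wz: "dist w z \<le> dist w q"
    unfolding q_def by (rule key[OF cat qc tau zJ fw]) (use s in auto)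
  have "(dist w (g r))\<^sup>2 \<le> (1 - r) * (dist w q)\<^sup>2 + r * (dist w z)\<^sup>2 - (1 - r) * r * (dist q z)\<^sup>2"
    by (rule cat0_ineq[OF cat mg r01])
  also have "\<dots> \<le> (1 - r) * (dist w q)\<^sup>2 + r * (dist w q)\<^sup>2"
  proof -
    have "r * (dist w z)\<^sup>2 \<le> r * (dist w q)\<^sup>2" using r01 wz by (intro mult_left_mono power_mono) auto
    moreover have "0 \<le> (1 - r) * r * (dist q z)\<^sup>2" using r01 by auto
    ultimately show ?thesis by linarith
  qed
  also have "\<dots> = (dist w q)\<^sup>2" by (simp add: algebra_simps)
  finally have "(dist w (g r))\<^sup>2 \<le> (dist w q)\<^sup>2" .
  then have "dist w (g r) \<le> dist w q" by (rule power2_le_imp_le) simp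
  then show ?thesis using gr q_def by simp
qed


theorem mainTheorem12:
  fixes f :: "'a::{metric_space, complete_space} \<Rightarrow> real"
    and x0 :: 'a and \<tau> :: "nat \<Rightarrow> real" and x :: "nat \<Rightarrow> 'a"
    and T :: "nat \<Rightarrow> real" and L :: ereal and \<xi> :: "real \<Rightarrow> 'a"
  assumes "CAT0 TYPE('a)"
    and "lsc f"
    and "quasi_convex f"
    and "\<And>k. k \<ge> 1 \<Longrightarrow> \<tau> k > 0"
    and "x 0 = x0"
    and "\<And>k. k \<ge> 1 \<Longrightarrow> x k \<in> JJ f (\<tau> k) (x (k - 1))"
    and "\<And>k. T k = (\<Sum>i=1..k. \<tau> i)"
    and "L = lim (\<lambda>k. ereal (T k))"
    and "\<And>t k. k \<ge> 1 \<Longrightarrow> T (k - 1) \<le> t \<Longrightarrow> t < T k \<Longrightarrow>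
           \<xi> t = geo (x (k - 1)) (x k) ((t - T (k - 1)) / \<tau> k)"
  shows "(\<forall>k l m. k < l \<and> l < m \<longrightarrow> dist (x l) (x m) \<le> dist (x k) (x m))
       \<and> self_contracted {t. 0 \<le> t \<and> ereal t < L} \<xi>"
proof -
  note cat = assms(1) and qc = assms(3)
  have tau: "\<tau> k > 0" if "k \<ge> 1" for k using assms(4) that by blast
  have xJ: "x k \<in> JJ f (\<tau> k) (x (k - 1))" if "k \<ge> 1" for k using assms(6) that by blast
  have fstep: "f (x k) \<le> f (x (k - 1))" if k: "k \<ge> 1" for k
  proof -
    have "f (x k) + (dist (x (k - 1)) (x k))\<^sup>2 / (2 * \<tau> k)
          \<le> f (x (k - 1)) + (dist (x (k - 1)) (x (k - 1)))\<^sup>2 / (2 * \<tau> k)"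
      using xJ[OF k] unfolding JJ_def by blast
    moreover have "0 \<le> (dist (x (k - 1)) (x k))\<^sup>2 / (2 * \<tau> k)" using tau[OF k] by simp
    ultimately show ?thesis by simp
  qed
  have fdec: "f (x j) \<le> f (x i)" if "i \<le> j" for i j
    using that
  proof (induction j)
    case 0 then show ?case by simp
  next
    case (Suc j)
    show ?case
    proof (cases "i = Suc j")
      case True then show ?thesis by simp
    next
      case False
      then have "f (x j) \<le> f (x i)" using Suc by simp
      moreover have "f (x (Suc j)) \<le> f (x j)" using fstep[of "Suc j"] by simp
      ultimately show ?thesis by simp
    qed
  qed
  define P where "P = (\<lambda>j s. geo (x (j - 1)) (x j) s)"
  have P0: "P j 0 = x (j - 1)" for j by (simp add: P_def geo_0[OF cat])
  have P1: "P j 1 = x j" for j by (simp add: P_def geo_1[OF cat])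
  have chain: "dist w (P j s') \<le> dist w (P i s)"
    if "f w \<le> f (x n)" "1 \<le> i" "i \<le> j" "j \<le> n" "s \<in> {0..1}" "s' \<in> {0..1}" "i < j \<or> s \<le> s'"
    for w n i j s s'
    using that
  proof (induction j arbitrary: s')
    case 0 then show ?case by simp
  next
    case (Suc j)
    have fw: "f w \<le> f (x (Suc j))" using Suc.prems fdec[of "Suc j" n] by simp
    have j1: "Suc j \<ge> 1" by simp
    have mono: "dist w (P (Suc j) b) \<le> dist w (P (Suc j) a)" if "0 \<le> a" "a \<le> b" "b \<le> 1" for a b
      unfolding P_def using mono_seg[OF cat qc tau[OF j1] xJ[OF j1] _ that] fw by simp
    show ?case
    proof (cases "i = Suc j")
      case True
      then have "s \<le> s'" using Suc.prems by simp
      then show ?thesis using mono[of s s'] Suc.prems True by simp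
    next
      case False
      then have ij: "i \<le> j" using Suc.prems by simp
      have "dist w (P (Suc j) s') \<le> dist w (P (Suc j) 0)" using mono[of 0 s'] Suc.prems by simp
      also have "\<dots> = dist w (P j 1)" by (simp add: P0 P1)
      also have "\<dots> \<le> dist w (P i s)"
        by (rule Suc.IH) (use Suc.prems ij in simp_all)
      finally show ?thesis .
    qed
  qed
  have part1: "\<forall>k l m. k < l \<and> l < m \<longrightarrow> dist (x l) (x m) \<le> dist (x k) (x m)"
  proof (intro allI impI)
    fix k l m :: nat assume h: "k < l \<and> l < m"
    have "dist (x m) (P l 1) \<le> dist (x m) (P (Suc k) 0)"
      by (rule chain[of "x m" m]) (use h in auto)
    then show "dist (x l) (x m) \<le> dist (x k) (x m)" by (simp add: P0 P1 dist_commute)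
  qed
  have T0: "T 0 = 0" using assms(7)[of 0] by simp
  have TS: "T (Suc k) = T k + \<tau> (Suc k)" for k using assms(7)[of "Suc k"] assms(7)[of k] by simp
  have Tsm: "strict_mono T" unfolding strict_mono_Suc_iff using TS tau by (simp add: add_pos_pos)
  have Tle: "T a \<le> T b" if "a \<le> b" for a b using Tsm that by (simp add: strict_mono_less_eq)
  have Lsup: "L = (SUP k. ereal (T k))"
  proof -
    have "incseq (\<lambda>k. ereal (T k))" using Tle by (simp add: incseq_def)
    then have "(\<lambda>k. ereal (T k)) \<longlonglongrightarrow> (SUP k. ereal (T k))" by (rule LIMSEQ_SUP)
    then show ?thesis using assms(8) by (simp add: limI)
  qed
  have seg: "\<exists>k\<ge>1. T (k - 1) \<le> t \<and> t < T k" if t: "0 \<le> t" "ereal t < L" for t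
  proof -
    have ex: "\<exists>k. t < T k"
    proof (rule ccontr)
      assume "\<not> ?thesis"
      then have "\<forall>k. ereal (T k) \<le> ereal t" by (auto simp: not_less)
      then have "L \<le> ereal t" unfolding Lsup by (simp add: SUP_le_iff)
      then show False using t by simp
    qed
    define k where "k = (LEAST k. t < T k)"
    have k: "t < T k" unfolding k_def using ex by (rule LeastI_ex)
    have "k \<noteq> 0" using k T0 t by (cases k) auto
    moreover have "\<not> t < T (k - 1)" unfolding k_def
      by (rule not_less_Least) (use \<open>k \<noteq> 0\<close> k_def in simp)
    ultimately show ?thesis using k by (intro exI[of _ k]) auto
  qed
  have order: "k \<le> k'" if "1 \<le> k" "1 \<le> k'" "T (k - 1) \<le> t" "t < T k" "T (k' - 1) \<le> t'" "t' < T k'" "t \<le> t'"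
    for k k' t t'
  proof (rule ccontr)
    assume "\<not> k \<le> k'"
    then have "T k' \<le> T (k - 1)" by (intro Tle) auto
    then show False using that by simp
  qed
  have Tk: "T k = T (k - 1) + \<tau> k" if "k \<ge> 1" for k
    using TS[of "k - 1"] that by simp
  have rep: "\<xi> t = P k ((t - T (k - 1)) / \<tau> k) \<and> (t - T (k - 1)) / \<tau> k \<in> {0..<1}"
    if "1 \<le> k" "T (k - 1) \<le> t" "t < T k" for k t
  proof -
    have "(t - T (k - 1)) / \<tau> k < 1" using that Tk[of k] tau[of k] by (simp add: field_simps)
    moreover have "0 \<le> (t - T (k - 1)) / \<tau> k" using that tau[of k] by simp
    ultimately show ?thesis using assms(9)[OF that] by (simp add: P_def)
  qed
  have part2: "self_contracted {t. 0 \<le> t \<and> ereal t < L} \<xi>"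
    unfolding self_contracted_def
  proof (intro ballI impI)
    fix t1 t2 t3 assume t: "t1 \<in> {t. 0 \<le> t \<and> ereal t < L}" "t2 \<in> {t. 0 \<le> t \<and> ereal t < L}"
      "t3 \<in> {t. 0 \<le> t \<and> ereal t < L}" and le: "t1 \<le> t2 \<and> t2 \<le> t3"
    obtain k1 where k1: "k1 \<ge> 1" "T (k1 - 1) \<le> t1" "t1 < T k1" using seg t(1) by auto
    obtain k2 where k2: "k2 \<ge> 1" "T (k2 - 1) \<le> t2" "t2 < T k2" using seg t(2) by auto
    obtain m where k3: "m \<ge> 1" "T (m - 1) \<le> t3" "t3 < T m" using seg t(3) by auto
    define s1 where "s1 = (t1 - T (k1 - 1)) / \<tau> k1"
    define s2 where "s2 = (t2 - T (k2 - 1)) / \<tau> k2"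
    define s3 where "s3 = (t3 - T (m - 1)) / \<tau> m"
    have r1: "\<xi> t1 = P k1 s1" "s1 \<in> {0..<1}" using rep[OF k1] s1_def by auto
    have r2: "\<xi> t2 = P k2 s2" "s2 \<in> {0..<1}" using rep[OF k2] s2_def by auto
    have r3: "\<xi> t3 = P m s3" "s3 \<in> {0..<1}" using rep[OF k3] s3_def by auto
    have o12: "k1 \<le> k2" using order[OF k1(1) k2(1) k1(2,3) k2(2,3)] le by simp
    have o23: "k2 \<le> m" using order[OF k2(1) k3(1) k2(2,3) k3(2,3)] le by simp
    have s12: "s1 \<le> s2" if "k1 = k2"
      using that le tau[OF k1(1)] unfolding s1_def s2_def by (simp add: divide_right_mono)
    have s23: "s2 \<le> s3" if "k2 = m"
      using that le tau[OF k2(1)] unfolding s2_def s3_def by (simp add: divide_right_mono)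
    define w where "w = P m s3"
    have fw: "f w \<le> f (x (m - 1))"
    proof (cases "s3 = 0")
      case True then show ?thesis by (simp add: w_def P0)
    next
      case False
      then have "s3 \<in> {0<..<1}" using r3 by auto
      then have "f w \<le> max (f (x (m - 1))) (f (x m))"
        using qc unfolding quasi_convex_def w_def P_def by blast
      then show ?thesis using fstep[OF k3(1)] by simp
    qed
    have "dist (P k2 s2) w \<le> dist (P k1 s1) w"
    proof (cases "k2 < m")
      case True
      have "dist w (P k2 s2) \<le> dist w (P k1 s1)"
      proof (rule chain[OF fw])
        show "1 \<le> k1" "k1 \<le> k2" "k2 \<le> m - 1" using True k1 o12 by simp_all
        show "s1 \<in> {0..1}" "s2 \<in> {0..1}" using r1 r2 by simp_all
        show "k1 < k2 \<or> s1 \<le> s2" using s12 o12 by linarith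
      qed
      then show ?thesis by (simp add: dist_commute)
    next
      case False
      then have km: "k2 = m" using o23 by simp
      have dP: "dist (P m a) (P m b) = \<bar>b - a\<bar> * dist (x (m - 1)) (x m)"
        if "a \<in> {0..1}" "b \<in> {0..1}" for a b
        unfolding P_def using geo_dist[OF cat that] .
      show ?thesis
      proof (cases "k1 = m")
        case True
        then have "s1 \<le> s2" "s2 \<le> s3" using s12 s23 km by auto
        have "dist (P k2 s2) w = \<bar>s3 - s2\<bar> * dist (x (m - 1)) (x m)"
          using dP[of s2 s3] r2 r3 km w_def by simp
        also have "\<dots> \<le> \<bar>s3 - s1\<bar> * dist (x (m - 1)) (x m)"
          using \<open>s1 \<le> s2\<close> \<open>s2 \<le> s3\<close> by (intro mult_right_mono) simp_all
        also have "\<dots> = dist (P k1 s1) w" using dP[of s1 s3] r1 r3 True w_def by simp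
        finally show ?thesis .
      next
        case False
        then have k1m: "k1 < m" using o12 km by simp
        have "dist (P k2 s2) w = \<bar>s3 - s2\<bar> * dist (x (m - 1)) (x m)"
          using dP[of s2 s3] r2 r3 km w_def by simp
        also have "\<dots> \<le> \<bar>s3 - 0\<bar> * dist (x (m - 1)) (x m)"
          using s23[OF km] r2 r3 by (intro mult_right_mono) auto
        also have "\<dots> = dist (P m 0) w" using dP[of 0 s3] r3 w_def by simp
        also have "\<dots> = dist w (P (m - 1) 1)" using k1m by (simp add: P0 P1 dist_commute)
        also have "\<dots> \<le> dist w (P k1 s1)"
          by (rule chain[OF fw]) (use k1 k1m r1 in simp_all)
        finally show ?thesis by (simp add: dist_commute)
      qed
    qed
    then show "dist (\<xi> t2) (\<xi> t3) \<le> dist (\<xi> t1) (\<xi> t3)" using r1 r2 r3 w_def by simp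
  qed
  show ?thesis using part1 part2 by blast
qed
end
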